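(* Let $K$ be the transition kernel of a Markov chain on a general measurable state space $(\mathcal X,\mathcal B(\mathcal X))$ that is reversible with respect to a probability measure $\pi$. Let $\mu_0\ll\pi$ be an initial distribution with $\chi(\mu_0\|\pi)<\infty$, let $h_0=d\mu_0/d\pi$, and let $\mu_n$ be the law of the chain after $n$ steps. Then for all $n\in\mathbb N$, $$\chi(\mu_n\|\pi)^2\ge\chi(\mu_0\|\pi)^2\Big(1-\frac{\mathcal E_{K^2}(h_0,h_0)}{\chi(\mu_0\|\pi)^2}\Big)^n.$$
   Context: Reversibility: $K(x,dy)\pi(dx)=K(y,dx)\pi(dy)$. $K^n$ is the $n$-step kernel, $K^n(x,dy)=\int K^{n-1}(x,dz)K(z,dy)$, and $\mu_n(S)=\int\mu_0(dx)K^n(x,S)$. For $\mu\ll\pi$, $\chi(\mu\|\pi):=\big(\int(\frac{d\mu}{d\pi}-1)^2d\pi\big)^{1/2}$ (so $\chi(\mu\|\pi)^2$ is the $\chi^2$-divergence). For a kernel $P$ reversible w.r.t. $\pi$ and $g\in L_2(\pi)$, the Dirichlet form is $\mathcal E_P(g,g)=\frac12\iint(g(x)-g(y))^2P(x,dy)\pi(dx)$. *)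

theory Defs
  imports "HOL-Probability.Probability"
begin

definition reversible :: "'a measure \<Rightarrow> ('a \<Rightarrow> 'a measure) \<Rightarrow> bool" where
  "reversible \<pi> K \<longleftrightarrow>
     (\<forall>A\<in>sets \<pi>. \<forall>B\<in>sets \<pi>.
        (\<integral>\<^sup>+x. indicator A x * emeasure (K x) B \<partial>\<pi>) =
        (\<integral>\<^sup>+y. indicator B y * emeasure (K y) A \<partial>\<pi>))"

fun kpow :: "'a measure \<Rightarrow> ('a \<Rightarrow> 'a measure) \<Rightarrow> nat \<Rightarrow> 'a \<Rightarrow> 'a measure" where
  "kpow M K 0 = return M"
| "kpow M K (Suc n) = (\<lambda>x. kpow M K n x \<bind> K)"

definition law_n :: "'a measure \<Rightarrow> ('a \<Rightarrow> 'a measure) \<Rightarrow> 'a measure \<Rightarrow> nat \<Rightarrow> 'a measure" where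
  "law_n M K \<mu>0 n = \<mu>0 \<bind> kpow M K n"

definition chi2 :: "'a measure \<Rightarrow> 'a measure \<Rightarrow> ennreal" where
  "chi2 \<pi> \<mu> = (\<integral>\<^sup>+x. ennreal ((enn2real (RN_deriv \<pi> \<mu> x) - 1)\<^sup>2) \<partial>\<pi>)"

definition dirichlet :: "'a measure \<Rightarrow> ('a \<Rightarrow> 'a measure) \<Rightarrow> ('a \<Rightarrow> real) \<Rightarrow> ennreal" where
  "dirichlet \<pi> P g = (\<integral>\<^sup>+x. (\<integral>\<^sup>+y. ennreal ((g x - g y)\<^sup>2) \<partial>(P x)) \<partial>\<pi>) / 2"

end

theory Submission
  imports Defs
begin

locale mk =
  fixes \<pi> :: "'a measure" and K :: "'a \<Rightarrow> 'a measure"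
  assumes P: "prob_space \<pi>"
    and K: "K \<in> \<pi> \<rightarrow>\<^sub>M prob_algebra \<pi>"
    and R: "reversible \<pi> K"
begin

lemma Ksub[measurable]: "K \<in> \<pi> \<rightarrow>\<^sub>M subprob_algebra \<pi>"
  using K by (rule measurable_prob_algebraD)

lemma Kx: "x \<in> space \<pi> \<Longrightarrow> prob_space (K x) \<and> sets (K x) = sets \<pi>"
  using measurable_space[OF K] by (auto simp: space_prob_algebra)

lemma spK: "x \<in> space \<pi> \<Longrightarrow> space (K x) = space \<pi>"
  using Kx sets_eq_imp_space_eq by blast

lemma ne: "space \<pi> \<noteq> {}"
  using P prob_space.not_empty by blast

lemma Pmeas[measurable]: "g \<in> borel_measurable \<pi> \<Longrightarrow> (\<lambda>x. \<integral>\<^sup>+y. g y \<partial>K x) \<in> borel_measurable \<pi>"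
  by (rule measurable_compose[OF Ksub nn_integral_measurable_subprob_algebra])

lemma Kd: "K \<in> density \<pi> g \<rightarrow>\<^sub>M subprob_algebra \<pi>"
  using Ksub by (simp cong: measurable_cong_sets)

lemma em_bind_dens:
  assumes g[measurable]: "g \<in> borel_measurable \<pi>" and A: "A \<in> sets \<pi>"
  shows "emeasure (density \<pi> g \<bind> K) A = (\<integral>\<^sup>+x. g x * emeasure (K x) A \<partial>\<pi>)"
proof -
  have [measurable]: "(\<lambda>x. emeasure (K x) A) \<in> borel_measurable \<pi>"
    using measurable_emeasure_kernel[OF Ksub A] .
  show ?thesis
    by (subst emeasure_bind[OF _ Kd A]) (auto simp: ne nn_integral_density)
qed

lemma nn_bind_dens:
  assumes g[measurable]: "g \<in> borel_measurable \<pi>" and f[measurable]: "f \<in> borel_measurable \<pi>"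
  shows "(\<integral>\<^sup>+y. f y \<partial>(density \<pi> g \<bind> K)) = (\<integral>\<^sup>+x. g x * (\<integral>\<^sup>+y. f y \<partial>K x) \<partial>\<pi>)"
  by (subst nn_integral_bind[OF f Kd]) (auto simp: nn_integral_density)

lemma sets_bd: "sets (density \<pi> g \<bind> K) = sets \<pi>"
  by (subst sets_bind) (auto simp: Kx ne)

lemma E0:
  assumes B: "B \<in> sets \<pi>"
  shows "density \<pi> (indicator B) \<bind> K = density \<pi> (\<lambda>y. emeasure (K y) B)"
proof (rule measure_eqI)
  show "sets (density \<pi> (indicator B) \<bind> K) = sets (density \<pi> (\<lambda>y. emeasure (K y) B))"
    by (simp add: sets_bd)
  fix A assume "A \<in> sets (density \<pi> (indicator B) \<bind> K)"
  then have A: "A \<in> sets \<pi>" by (simp add: sets_bd)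
  have "emeasure (density \<pi> (indicator B) \<bind> K) A = (\<integral>\<^sup>+x. indicator B x * emeasure (K x) A \<partial>\<pi>)"
    using A B by (simp add: em_bind_dens)
  also have "\<dots> = (\<integral>\<^sup>+x. indicator A x * emeasure (K x) B \<partial>\<pi>)"
    using R A B unfolding reversible_def by auto
  also have "\<dots> = emeasure (density \<pi> (\<lambda>y. emeasure (K y) B)) A"
    using A B by (simp add: emeasure_density mult.commute)
  finally show "emeasure (density \<pi> (indicator B) \<bind> K) A = emeasure (density \<pi> (\<lambda>y. emeasure (K y) B)) A" .
qed

lemma step1:
  assumes A: "A \<in> sets \<pi>" and g[measurable]: "g \<in> borel_measurable \<pi>"
  shows "(\<integral>\<^sup>+x. indicator A x * (\<integral>\<^sup>+y. g y \<partial>K x) \<partial>\<pi>) = (\<integral>\<^sup>+x. g x * emeasure (K x) A \<partial>\<pi>)"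
proof -
  have "(\<integral>\<^sup>+x. indicator A x * (\<integral>\<^sup>+y. g y \<partial>K x) \<partial>\<pi>) = (\<integral>\<^sup>+y. g y \<partial>(density \<pi> (indicator A) \<bind> K))"
    using A by (simp add: nn_bind_dens)
  also have "\<dots> = (\<integral>\<^sup>+y. g y \<partial>density \<pi> (\<lambda>y. emeasure (K y) A))"
    using A by (simp add: E0)
  also have "\<dots> = (\<integral>\<^sup>+x. emeasure (K x) A * g x \<partial>\<pi>)"
    using A by (simp add: nn_integral_density)
  finally show ?thesis by (simp add: mult.commute)
qed

lemma E:
  assumes g[measurable]: "g \<in> borel_measurable \<pi>"
  shows "density \<pi> g \<bind> K = density \<pi> (\<lambda>x. \<integral>\<^sup>+y. g y \<partial>K x)"
proof (rule measure_eqI)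
  show "sets (density \<pi> g \<bind> K) = sets (density \<pi> (\<lambda>x. \<integral>\<^sup>+y. g y \<partial>K x))"
    by (simp add: sets_bd)
  fix A assume "A \<in> sets (density \<pi> g \<bind> K)"
  then have A: "A \<in> sets \<pi>" by (simp add: sets_bd)
  show "emeasure (density \<pi> g \<bind> K) A = emeasure (density \<pi> (\<lambda>x. \<integral>\<^sup>+y. g y \<partial>K x)) A"
    using A by (simp add: em_bind_dens emeasure_density step1 mult.commute)
qed

lemma REV:
  assumes f[measurable]: "f \<in> borel_measurable \<pi>" and g[measurable]: "g \<in> borel_measurable \<pi>"
  shows "(\<integral>\<^sup>+x. f x * (\<integral>\<^sup>+y. g y \<partial>K x) \<partial>\<pi>) = (\<integral>\<^sup>+x. g x * (\<integral>\<^sup>+y. f y \<partial>K x) \<partial>\<pi>)"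
proof -
  have "(\<integral>\<^sup>+x. f x * (\<integral>\<^sup>+y. g y \<partial>K x) \<partial>\<pi>) = (\<integral>\<^sup>+x. f x \<partial>density \<pi> (\<lambda>x. \<integral>\<^sup>+y. g y \<partial>K x))"
    by (simp add: nn_integral_density mult.commute)
  also have "\<dots> = (\<integral>\<^sup>+x. f x \<partial>(density \<pi> g \<bind> K))" by (simp add: E)
  also have "\<dots> = (\<integral>\<^sup>+x. g x * (\<integral>\<^sup>+y. f y \<partial>K x) \<partial>\<pi>)" by (simp add: nn_bind_dens)
  finally show ?thesis .
qed

lemma stat:
  assumes g[measurable]: "g \<in> borel_measurable \<pi>"
  shows "(\<integral>\<^sup>+x. (\<integral>\<^sup>+y. g y \<partial>K x) \<partial>\<pi>) = (\<integral>\<^sup>+x. g x \<partial>\<pi>)"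
proof -
  have "(\<integral>\<^sup>+x. (\<integral>\<^sup>+y. g y \<partial>K x) \<partial>\<pi>) = (\<integral>\<^sup>+x. 1 * (\<integral>\<^sup>+y. g y \<partial>K x) \<partial>\<pi>)" by simp
  also have "\<dots> = (\<integral>\<^sup>+x. g x * (\<integral>\<^sup>+y. 1 \<partial>K x) \<partial>\<pi>)" by (rule REV) auto
  also have "\<dots> = (\<integral>\<^sup>+x. g x \<partial>\<pi>)"
  proof (intro nn_integral_cong)
    fix x assume x: "x \<in> space \<pi>"
    have "emeasure (K x) (space \<pi>) = 1" using Kx[OF x] spK[OF x] prob_space.emeasure_space_1 by metis
    then show "g x * (\<integral>\<^sup>+y. 1 \<partial>K x) = g x" using x by (simp add: spK)
  qed
  finally show ?thesis .
qed

end

primrec Hs :: "('a \<Rightarrow> 'a measure) \<Rightarrow> ('a \<Rightarrow> ennreal) \<Rightarrow> nat \<Rightarrow> 'a \<Rightarrow> ennreal" where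
  "Hs K g 0 = g"
| "Hs K g (Suc n) = (\<lambda>x. \<integral>\<^sup>+y. Hs K g n y \<partial>K x)"

locale mk2 = mk +
  fixes \<mu>0 :: "'a measure"
  assumes M0: "\<mu>0 \<in> space (prob_algebra \<pi>)"
    and AC: "absolutely_continuous \<pi> \<mu>0"
    and fin: "chi2 \<pi> \<mu>0 < \<infinity>"
begin

definition h0 where "h0 x = enn2real (RN_deriv \<pi> \<mu>0 x)"
abbreviation H where "H \<equiv> Hs K (\<lambda>x. ennreal (h0 x))"
definition hh where "hh n x = enn2real (H n x)"
definition N where "N n = (\<integral>\<^sup>+x. H n x ^ 2 \<partial>\<pi>)"
definition Chi where "Chi n = (\<integral>\<^sup>+x. ennreal ((hh n x - 1)\<^sup>2) \<partial>\<pi>)"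

lemma sets_mu0: "sets \<mu>0 = sets \<pi>" and prob_mu0: "prob_space \<mu>0"
  using M0 by (auto simp: space_prob_algebra)

lemma h0_meas[measurable]: "h0 \<in> borel_measurable \<pi>"
  unfolding h0_def[abs_def] by measurable

lemma Hmeas[measurable]: "H n \<in> borel_measurable \<pi>"
  by (induction n) (auto intro: Pmeas)

lemma hh_meas[measurable]: "hh n \<in> borel_measurable \<pi>"
  unfolding hh_def[abs_def] by measurable

lemma hh0: "hh 0 x = h0 x"
  by (simp add: hh_def h0_def)

lemma kpow_meas: "kpow \<pi> K n \<in> \<pi> \<rightarrow>\<^sub>M prob_algebra \<pi>"
proof (induction n)
  case 0 then show ?case by (simp add: measurable_return_prob_space)
next
  case (Suc n) then show ?case
    using measurable_bind_prob_space[OF Suc K] by simp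
qed

lemma PS: "prob_space \<pi>" by (rule P)

lemma law0: "\<mu>0 = density \<pi> (H 0)"
proof -
  interpret prob_space \<pi> by (rule P)
  interpret m: prob_space \<mu>0 by (rule prob_mu0)
  have ae: "AE x in \<pi>. RN_deriv \<pi> \<mu>0 x \<noteq> \<infinity>"
    by (rule RN_deriv_finite[OF _ AC sets_mu0]) (simp add: m.sigma_finite_measure_axioms)
  have "\<mu>0 = density \<pi> (RN_deriv \<pi> \<mu>0)"
    using density_RN_deriv[OF AC sets_mu0] by simp
  also have "\<dots> = density \<pi> (H 0)"
  proof (rule density_cong)
    show "AE x in \<pi>. RN_deriv \<pi> \<mu>0 x = H 0 x"
      using ae by eventually_elim (simp add: h0_def less_top)
  qed auto
  finally show ?thesis .
qed

lemma law: "law_n \<pi> K \<mu>0 n = density \<pi> (H n)"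
proof (induction n)
  case 0
  have "law_n \<pi> K \<mu>0 0 = \<mu>0" unfolding law_n_def using bind_return''[OF sets_mu0] by simp
  then show ?case using law0 by simp
next
  case (Suc n)
  have km: "kpow \<pi> K n \<in> \<mu>0 \<rightarrow>\<^sub>M subprob_algebra \<pi>"
    using measurable_prob_algebraD[OF kpow_meas[of n]] sets_mu0 by (simp cong: measurable_cong_sets)
  have "law_n \<pi> K \<mu>0 (Suc n) = \<mu>0 \<bind> (\<lambda>x. kpow \<pi> K n x \<bind> K)"
    by (simp add: law_n_def)
  also have "\<dots> = law_n \<pi> K \<mu>0 n \<bind> K"
    unfolding law_n_def by (rule bind_assoc[OF km Ksub, symmetric])
  also have "\<dots> = density \<pi> (H (Suc n))"
    using Suc by (simp add: E)
  finally show ?case .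
qed

lemma int1: "(\<integral>\<^sup>+x. H n x \<partial>\<pi>) = 1"
proof -
  have "prob_space (law_n \<pi> K \<mu>0 n)"
    unfolding law_n_def by (rule prob_space_bind'[OF M0 kpow_meas])
  then have "emeasure (density \<pi> (H n)) (space \<pi>) = 1"
    using law[of n] by (metis prob_space.emeasure_space_1 space_density)
  then show ?thesis by (simp add: emeasure_density)
qed

lemma AEfin: "AE x in \<pi>. H n x = ennreal (hh n x)"
proof -
  have "AE x in \<pi>. H n x \<noteq> \<infinity>"
    by (rule nn_integral_PInf_AE) (auto simp: int1)
  then show ?thesis
    by eventually_elim (auto simp: hh_def less_top)
qed


lemma sp1[simp]: "emeasure \<pi> (space \<pi>) = 1"
  using prob_space.emeasure_space_1[OF P] by simp

lemma one_int: "(\<integral>\<^sup>+x. 1 \<partial>\<pi>) = 1"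
  by simp

lemma jensen:
  assumes x: "x \<in> space \<pi>" and g[measurable]: "g \<in> borel_measurable \<pi>"
  shows "(\<integral>\<^sup>+y. g y \<partial>K x)\<^sup>2 \<le> (\<integral>\<^sup>+y. g y ^ 2 \<partial>K x)"
proof -
  have gm: "g \<in> borel_measurable (K x)" using Kx[OF x] by (simp cong: measurable_cong_sets)
  have "(\<integral>\<^sup>+y. g y * 1 \<partial>K x)\<^sup>2 \<le> (\<integral>\<^sup>+y. g y ^ 2 \<partial>K x) * (\<integral>\<^sup>+y. 1 ^ 2 \<partial>K x)"
    by (rule Cauchy_Schwarz_nn_integral[OF gm]) simp
  moreover have "(\<integral>\<^sup>+y. 1 \<partial>K x) = 1"
  proof -
    have "prob_space (K x)" using Kx[OF x] by simp
    then have "emeasure (K x) (space (K x)) = 1" by (rule prob_space.emeasure_space_1)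
    then show ?thesis by simp
  qed
  ultimately show ?thesis by simp
qed

lemma N_mono: "N (Suc n) \<le> N n"
proof -
  have "N (Suc n) \<le> (\<integral>\<^sup>+x. (\<integral>\<^sup>+y. H n y ^ 2 \<partial>K x) \<partial>\<pi>)"
    unfolding N_def by (auto intro!: nn_integral_mono jensen)
  also have "\<dots> = N n" unfolding N_def by (rule stat) simp
  finally show ?thesis .
qed

lemma pt1:
  assumes "0 \<le> (v::real)"
  shows "ennreal ((v - 1)\<^sup>2) + 2 * ennreal v = ennreal (v\<^sup>2) + 1"
proof -
  have "ennreal ((v - 1)\<^sup>2) + 2 * ennreal v = ennreal ((v - 1)\<^sup>2 + 2 * v)"
    using assms by (simp add: ennreal_mult)
  also have "(v - 1)\<^sup>2 + 2 * v = v\<^sup>2 + 1" by (simp add: power2_eq_square algebra_simps)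
  also have "ennreal (v\<^sup>2 + 1) = ennreal (v\<^sup>2) + 1" by simp
  finally show ?thesis .
qed

lemma hh_nonneg: "0 \<le> hh n x" by (simp add: hh_def)

lemma int_hh: "(\<integral>\<^sup>+x. ennreal (hh n x) \<partial>\<pi>) = 1"
proof -
  have "(\<integral>\<^sup>+x. ennreal (hh n x) \<partial>\<pi>) = (\<integral>\<^sup>+x. H n x \<partial>\<pi>)"
    by (rule nn_integral_cong_AE) (use AEfin[of n] in \<open>eventually_elim, simp\<close>)
  then show ?thesis using int1[of n] by simp
qed

lemma N_hh: "N n = (\<integral>\<^sup>+x. ennreal ((hh n x)\<^sup>2) \<partial>\<pi>)"
  unfolding N_def
proof (rule nn_integral_cong_AE)
  show "AE x in \<pi>. H n x ^ 2 = ennreal ((hh n x)\<^sup>2)"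
    using AEfin[of n] by eventually_elim (simp add: ennreal_power hh_nonneg)
qed

lemma Chi_N: "Chi n + 2 = N n + 1"
proof -
  have "(\<integral>\<^sup>+x. ennreal ((hh n x - 1)\<^sup>2) + 2 * ennreal (hh n x) \<partial>\<pi>) = Chi n + 2 * 1"
    unfolding Chi_def by (simp add: nn_integral_add nn_integral_cmult int_hh)
  moreover have "(\<integral>\<^sup>+x. ennreal ((hh n x)\<^sup>2) + 1 \<partial>\<pi>) = N n + 1"
    by (simp add: nn_integral_add N_hh one_int)
  moreover have "(\<integral>\<^sup>+x. ennreal ((hh n x - 1)\<^sup>2) + 2 * ennreal (hh n x) \<partial>\<pi>) =
      (\<integral>\<^sup>+x. ennreal ((hh n x)\<^sup>2) + 1 \<partial>\<pi>)"
    by (simp add: pt1 hh_nonneg)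
  ultimately show ?thesis by simp
qed

lemma Chi0: "Chi 0 = chi2 \<pi> \<mu>0"
  unfolding Chi_def chi2_def hh0 h0_def ..

lemma N0_fin: "N 0 < \<infinity>"
proof -
  have "N 0 + 1 < \<infinity>" using Chi_N[of 0] fin Chi0 by (metis ennreal_add_eq_top infinity_ennreal_def less_top top_neq_numeral)
  then show ?thesis by (simp add: less_top)
qed

lemma N_fin: "N n < \<infinity>"
proof (induction n)
  case 0 then show ?case by (rule N0_fin)
next
  case (Suc n) then show ?case using N_mono[of n] by (meson le_less_trans)
qed

lemma Chi_fin: "Chi n < \<infinity>"
proof -
  have "Chi n \<le> Chi n + 2" by simp
  also have "\<dots> = N n + 1" by (rule Chi_N)
  also have "\<dots> < \<infinity>" using N_fin[of n] by (simp add: less_top)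
  finally show ?thesis .
qed

lemma F6: "(\<integral>\<^sup>+x. H m x * H (Suc (Suc m)) x \<partial>\<pi>) = N (Suc m)"
proof -
  have "(\<integral>\<^sup>+x. H m x * H (Suc (Suc m)) x \<partial>\<pi>) = (\<integral>\<^sup>+x. H m x * (\<integral>\<^sup>+y. H (Suc m) y \<partial>K x) \<partial>\<pi>)"
    by simp
  also have "\<dots> = (\<integral>\<^sup>+x. H (Suc m) x * (\<integral>\<^sup>+y. H m y \<partial>K x) \<partial>\<pi>)"
    by (rule REV) simp_all
  also have "\<dots> = N (Suc m)" unfolding N_def by (simp add: power2_eq_square)
  finally show ?thesis .
qed

lemma pt2:
  assumes "0 \<le> (a::real)" "0 \<le> b"
  shows "ennreal (a * b) + 1 \<le> ennreal (\<bar>a - 1\<bar> * \<bar>b - 1\<bar>) + ennreal a + ennreal b"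
proof -
  have "a * b + 1 \<le> \<bar>a - 1\<bar> * \<bar>b - 1\<bar> + a + b"
  proof -
    have "(a - 1) * (b - 1) \<le> \<bar>a - 1\<bar> * \<bar>b - 1\<bar>" by (metis abs_ge_self abs_mult)
    moreover have "a * b + 1 = (a - 1) * (b - 1) + a + b" by (simp add: algebra_simps)
    ultimately show ?thesis by linarith
  qed
  then have "ennreal (a * b + 1) \<le> ennreal (\<bar>a - 1\<bar> * \<bar>b - 1\<bar> + a + b)"
    by (rule ennreal_leI)
  then show ?thesis using assms by simp
qed

lemma CS: "(Chi (Suc m))\<^sup>2 \<le> Chi m * Chi (Suc (Suc m))"
proof -
  define I where "I = (\<integral>\<^sup>+x. ennreal (\<bar>hh m x - 1\<bar>) * ennreal (\<bar>hh (Suc (Suc m)) x - 1\<bar>) \<partial>\<pi>)"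
  have ab: "(\<integral>\<^sup>+x. ennreal (hh m x * hh (Suc (Suc m)) x) \<partial>\<pi>) = N (Suc m)"
    unfolding F6[symmetric]
  proof (rule nn_integral_cong_AE)
    show "AE x in \<pi>. ennreal (hh m x * hh (Suc (Suc m)) x) = H m x * H (Suc (Suc m)) x"
      using AEfin[of m] AEfin[of "Suc (Suc m)"] by eventually_elim (simp add: ennreal_mult hh_nonneg)
  qed
  have "(\<integral>\<^sup>+x. ennreal (hh m x * hh (Suc (Suc m)) x) + 1 \<partial>\<pi>) \<le>
     (\<integral>\<^sup>+x. ennreal (\<bar>hh m x - 1\<bar> * \<bar>hh (Suc (Suc m)) x - 1\<bar>) + ennreal (hh m x) + ennreal (hh (Suc (Suc m)) x) \<partial>\<pi>)"
    by (intro nn_integral_mono pt2 hh_nonneg)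
  also have "\<dots> = I + 1 + 1"
    unfolding I_def by (simp add: nn_integral_add int_hh ennreal_mult)
  finally have "N (Suc m) + 1 \<le> I + 1 + 1"
    by (simp add: nn_integral_add ab one_int)
  then have "N (Suc m) + 1 \<le> I + 2"
    by (simp add: one_add_one[symmetric] add.assoc del: one_add_one)
  then have "2 + Chi (Suc m) \<le> 2 + I"
    using Chi_N[of "Suc m"] by (simp add: add.commute)
  then have le: "Chi (Suc m) \<le> I"
    by (metis ennreal_add_left_cancel_le top_neq_numeral infinity_ennreal_def)
  have "(Chi (Suc m))\<^sup>2 \<le> I\<^sup>2" by (rule power_mono_ennreal[OF le])
  also have "\<dots> \<le> (\<integral>\<^sup>+x. ennreal (\<bar>hh m x - 1\<bar>) ^ 2 \<partial>\<pi>) * (\<integral>\<^sup>+x. ennreal (\<bar>hh (Suc (Suc m)) x - 1\<bar>) ^ 2 \<partial>\<pi>)"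
    unfolding I_def by (rule Cauchy_Schwarz_nn_integral) simp_all
  also have "\<dots> = Chi m * Chi (Suc (Suc m))"
    unfolding Chi_def by (simp add: ennreal_power)
  finally show ?thesis .
qed

lemma chi_law: "chi2 \<pi> (law_n \<pi> K \<mu>0 n) = Chi n"
proof -
  interpret prob_space \<pi> by (rule P)
  have ae: "AE x in \<pi>. H n x = RN_deriv \<pi> (density \<pi> (H n)) x"
    by (rule RN_deriv_unique) (simp_all)
  show ?thesis
    unfolding law chi2_def Chi_def
  proof (rule nn_integral_cong_AE)
    show "AE x in \<pi>. ennreal ((enn2real (RN_deriv \<pi> (density \<pi> (H n)) x) - 1)\<^sup>2) = ennreal ((hh n x - 1)\<^sup>2)"
      using ae by eventually_elim (simp add: hh_def)
  qed
qed


lemma L2: "x \<in> space \<pi> \<Longrightarrow> kpow \<pi> K 2 x = K x \<bind> K"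
  by (simp add: numeral_2_eq_2 bind_return[OF Ksub])

lemma Lx: "x \<in> space \<pi> \<Longrightarrow> sets (kpow \<pi> K 2 x) = sets \<pi> \<and> prob_space (kpow \<pi> K 2 x)"
  using measurable_space[OF kpow_meas[of 2]] by (auto simp: space_prob_algebra)

lemma nnL:
  assumes x: "x \<in> space \<pi>" and g[measurable]: "g \<in> borel_measurable \<pi>"
  shows "(\<integral>\<^sup>+y. g y \<partial>kpow \<pi> K 2 x) = (\<integral>\<^sup>+z. (\<integral>\<^sup>+y. g y \<partial>K z) \<partial>K x)"
proof -
  have "K \<in> K x \<rightarrow>\<^sub>M subprob_algebra \<pi>" using Ksub Kx[OF x] by (simp cong: measurable_cong_sets)
  then show ?thesis unfolding L2[OF x] by (rule nn_integral_bind[OF g])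
qed

lemma pt3:
  assumes "0 \<le> (a::real)" "0 \<le> b"
  shows "ennreal ((a - b)\<^sup>2) + 2 * (ennreal a * ennreal b) = ennreal a ^ 2 + ennreal b ^ 2"
proof -
  have "ennreal ((a - b)\<^sup>2) + 2 * (ennreal a * ennreal b) = ennreal ((a - b)\<^sup>2 + 2 * (a * b))"
    using assms by (simp add: ennreal_mult)
  also have "(a - b)\<^sup>2 + 2 * (a * b) = a ^ 2 + b ^ 2" by (simp add: power2_eq_square algebra_simps)
  also have "ennreal (a ^ 2 + b ^ 2) = ennreal a ^ 2 + ennreal b ^ 2" using assms by (simp add: ennreal_power)
  finally show ?thesis .
qed

lemma h0_nonneg: "0 \<le> h0 x" by (simp add: h0_def)

lemma dir_eq:
  defines "X \<equiv> (\<integral>\<^sup>+x. (\<integral>\<^sup>+y. ennreal ((h0 x - h0 y)\<^sup>2) \<partial>kpow \<pi> K 2 x) \<partial>\<pi>)"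
  shows "X + 2 * N 1 = 2 * N 0"
proof -
  have Lm: "kpow \<pi> K 2 \<in> \<pi> \<rightarrow>\<^sub>M subprob_algebra \<pi>" by (rule measurable_prob_algebraD[OF kpow_meas])
  have inm[measurable]: "(\<lambda>x. \<integral>\<^sup>+y. ennreal ((h0 x - h0 y)\<^sup>2) \<partial>kpow \<pi> K 2 x) \<in> borel_measurable \<pi>"
    by (rule nn_integral_measurable_subprob_algebra2[OF _ Lm]) measurable
  have sqm[measurable]: "(\<lambda>x. \<integral>\<^sup>+y. H 0 y ^ 2 \<partial>kpow \<pi> K 2 x) \<in> borel_measurable \<pi>"
    by (rule measurable_compose[OF Lm nn_integral_measurable_subprob_algebra]) simp
  have pw: "(\<integral>\<^sup>+y. ennreal ((h0 x - h0 y)\<^sup>2) \<partial>kpow \<pi> K 2 x) + 2 * (H 0 x * H 2 x)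
      = H 0 x ^ 2 + (\<integral>\<^sup>+y. H 0 y ^ 2 \<partial>kpow \<pi> K 2 x)" if x: "x \<in> space \<pi>" for x
  proof -
    have st: "sets (kpow \<pi> K 2 x) = sets \<pi>" and ps: "prob_space (kpow \<pi> K 2 x)" using Lx[OF x] by auto
    have one: "emeasure (kpow \<pi> K 2 x) (space (kpow \<pi> K 2 x)) = 1"
      using prob_space.emeasure_space_1[OF ps] by simp
    have H2: "H 2 x = (\<integral>\<^sup>+y. H 0 y \<partial>kpow \<pi> K 2 x)"
      using nnL[OF x, of "H 0"] by (simp add: numeral_2_eq_2)
    have "(\<integral>\<^sup>+y. ennreal ((h0 x - h0 y)\<^sup>2) + 2 * (ennreal (h0 x) * ennreal (h0 y)) \<partial>kpow \<pi> K 2 x)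
        = (\<integral>\<^sup>+y. ennreal ((h0 x - h0 y)\<^sup>2) \<partial>kpow \<pi> K 2 x) + 2 * (H 0 x * H 2 x)"
      unfolding H2 using st
      by (simp add: nn_integral_add nn_integral_cmult mult.assoc cong: measurable_cong_sets)
    moreover have "(\<integral>\<^sup>+y. ennreal ((h0 x - h0 y)\<^sup>2) + 2 * (ennreal (h0 x) * ennreal (h0 y)) \<partial>kpow \<pi> K 2 x)
        = (\<integral>\<^sup>+y. ennreal (h0 x) ^ 2 + ennreal (h0 y) ^ 2 \<partial>kpow \<pi> K 2 x)"
      by (simp add: pt3 h0_nonneg)
    moreover have "\<dots> = H 0 x ^ 2 + (\<integral>\<^sup>+y. H 0 y ^ 2 \<partial>kpow \<pi> K 2 x)"
      using st by (simp add: nn_integral_add nn_integral_cmult one cong: measurable_cong_sets)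
    ultimately show ?thesis by simp
  qed
  have "X + 2 * N 1 = (\<integral>\<^sup>+x. (\<integral>\<^sup>+y. ennreal ((h0 x - h0 y)\<^sup>2) \<partial>kpow \<pi> K 2 x) + 2 * (H 0 x * H 2 x) \<partial>\<pi>)"
  proof -
    have f6: "(\<integral>\<^sup>+x. H 0 x * H 2 x \<partial>\<pi>) = N 1"
      using F6[of 0] by (simp only: numeral_2_eq_2 One_nat_def)
    have [measurable]: "H 2 \<in> borel_measurable \<pi>" by (rule Hmeas)
    show ?thesis unfolding X_def f6[symmetric]
      by (simp add: nn_integral_add nn_integral_cmult del: Hs.simps)
  qed
  also have "\<dots> = (\<integral>\<^sup>+x. H 0 x ^ 2 + (\<integral>\<^sup>+y. H 0 y ^ 2 \<partial>kpow \<pi> K 2 x) \<partial>\<pi>)"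
    by (rule nn_integral_cong) (rule pw)
  also have "\<dots> = N 0 + (\<integral>\<^sup>+x. (\<integral>\<^sup>+y. H 0 y ^ 2 \<partial>kpow \<pi> K 2 x) \<partial>\<pi>)"
    unfolding N_def by (rule nn_integral_add) (use sqm in auto)
  also have "(\<integral>\<^sup>+x. (\<integral>\<^sup>+y. H 0 y ^ 2 \<partial>kpow \<pi> K 2 x) \<partial>\<pi>) = (\<integral>\<^sup>+x. (\<integral>\<^sup>+z. (\<integral>\<^sup>+y. H 0 y ^ 2 \<partial>K z) \<partial>K x) \<partial>\<pi>)"
    by (rule nn_integral_cong) (simp add: nnL)
  also have "\<dots> = (\<integral>\<^sup>+z. (\<integral>\<^sup>+y. H 0 y ^ 2 \<partial>K z) \<partial>\<pi>)"
    by (rule stat) simp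
  also have "\<dots> = N 0" unfolding N_def by (rule stat) simp
  finally show ?thesis by (simp add: mult_2)
qed

definition c where "c n = enn2real (Chi n)"

lemma c_nonneg: "0 \<le> c n" by (simp add: c_def)

lemma N_c: "enn2real (N n) = c n + 1"
proof -
  have "enn2real (Chi n + 2) = enn2real (N n + 1)" by (simp add: Chi_N)
  then show ?thesis using Chi_fin[of n] N_fin[of n] by (simp add: enn2real_plus c_def)
qed

lemma c_CS: "(c (Suc m))\<^sup>2 \<le> c m * c (Suc (Suc m))"
proof -
  have "enn2real ((Chi (Suc m))\<^sup>2) \<le> enn2real (Chi m * Chi (Suc (Suc m)))"
    by (rule enn2real_mono[OF CS]) (use Chi_fin in \<open>simp add: ennreal_mult_less_top\<close>)
  then show ?thesis by (simp add: c_def power2_eq_square enn2real_mult)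
qed

lemma dir_c: "enn2real (dirichlet \<pi> (kpow \<pi> K 2) h0) = c 0 - c 1"
proof -
  define X where "X = (\<integral>\<^sup>+x. (\<integral>\<^sup>+y. ennreal ((h0 x - h0 y)\<^sup>2) \<partial>kpow \<pi> K 2 x) \<partial>\<pi>)"
  have e: "X + 2 * N 1 = 2 * N 0" unfolding X_def by (rule dir_eq)
  have Xf: "X < \<infinity>"
  proof -
    have "X \<le> X + 2 * N 1" by simp
    also have "\<dots> = 2 * N 0" by (rule e)
    finally have "X \<le> 2 * N 0" .
    also have "\<dots> < \<infinity>" using N_fin[of 0] by (simp add: ennreal_mult_less_top)
    finally show ?thesis .
  qed
  have "enn2real (X + 2 * N 1) = enn2real (2 * N 0)" using e by simp
  then have x: "enn2real X + 2 * (c 1 + 1) = 2 * (c 0 + 1)"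
    using Xf N_fin[of 1] by (simp add: enn2real_plus enn2real_mult ennreal_mult_less_top N_c)
  have "dirichlet \<pi> (kpow \<pi> K 2) h0 = X / 2" unfolding dirichlet_def X_def ..
  also have "X / 2 = ennreal (enn2real X) / ennreal 2" using Xf by (simp add: less_top)
  also have "\<dots> = ennreal (enn2real X / 2)" by (rule divide_ennreal) simp_all
  finally have "enn2real (dirichlet \<pi> (kpow \<pi> K 2) h0) = enn2real X / 2" by simp
  then show ?thesis using x by simp
qed

end

lemma logconv:
  fixes c :: "nat \<Rightarrow> real"
  assumes nn: "\<And>n. 0 \<le> c n" and cs: "\<And>m. (c (Suc m))\<^sup>2 \<le> c m * c (Suc (Suc m))"
  shows "c 0 * (1 - (c 0 - c 1) / c 0) ^ n \<le> c n"
proof (cases "c 0 = 0")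
  case True then show ?thesis using nn by simp
next
  case False
  then have c0: "0 < c 0" using nn[of 0] by simp
  define r where "r = c 1 / c 0"
  have r: "1 - (c 0 - c 1) / c 0 = r" using c0 by (simp add: r_def field_simps)
  have r0: "0 \<le> r" using nn c0 by (simp add: r_def)
  have step: "r * c n \<le> c (Suc n)" for n
  proof (induction n)
    case 0 then show ?case using c0 by (simp add: r_def)
  next
    case (Suc n)
    show ?case
    proof (cases "c (Suc n) = 0")
      case True then show ?thesis using nn r0 by simp
    next
      case False
      have pos: "0 < c n"
      proof (rule ccontr)
        assume "\<not> 0 < c n"
        then have "c n = 0" using nn[of n] by simp
        then have "(c (Suc n))\<^sup>2 \<le> 0" using cs[of n] by simp
        then show False using False by simp
      qed
      have "c n * (r * c (Suc n)) = (r * c n) * c (Suc n)" by simp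
      also have "\<dots> \<le> c (Suc n) * c (Suc n)"
        by (rule mult_right_mono[OF Suc nn])
      also have "\<dots> \<le> c n * c (Suc (Suc n))" using cs[of n] by (simp add: power2_eq_square)
      finally show ?thesis using pos by simp
    qed
  qed
  have "c 0 * r ^ n \<le> c n" for n
  proof (induction n)
    case 0 then show ?case by simp
  next
    case (Suc n)
    have "c 0 * r ^ Suc n = r * (c 0 * r ^ n)" by simp
    also have "\<dots> \<le> r * c n" by (rule mult_left_mono[OF Suc r0])
    also have "\<dots> \<le> c (Suc n)" by (rule step)
    finally show ?case .
  qed
  then show ?thesis using r by simp
qed

theorem theorem4:
  fixes \<pi> \<mu>0 :: "'a measure" and K :: "'a \<Rightarrow> 'a measure" and n :: nat
  assumes "prob_space \<pi>"
    and "K \<in> \<pi> \<rightarrow>\<^sub>M prob_algebra \<pi>"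
    and "reversible \<pi> K"
    and "\<mu>0 \<in> space (prob_algebra \<pi>)"
    and "absolutely_continuous \<pi> \<mu>0"
    and "chi2 \<pi> \<mu>0 < \<infinity>"
  shows "enn2real (chi2 \<pi> (law_n \<pi> K \<mu>0 n))
     \<ge> enn2real (chi2 \<pi> \<mu>0) *
        (1 - enn2real (dirichlet \<pi> (kpow \<pi> K 2) (\<lambda>x. enn2real (RN_deriv \<pi> \<mu>0 x)))
               / enn2real (chi2 \<pi> \<mu>0)) ^ n"
proof -
  interpret mk2 \<pi> K \<mu>0
    by (intro mk2.intro mk.intro mk2_axioms.intro) (fact assms)+
  have hd: "(\<lambda>x. enn2real (RN_deriv \<pi> \<mu>0 x)) = h0" by (simp add: h0_def[abs_def])
  have "c 0 * (1 - (c 0 - c 1) / c 0) ^ n \<le> c n"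
    by (rule logconv[of c, OF c_nonneg c_CS])
  moreover have "enn2real (chi2 \<pi> (law_n \<pi> K \<mu>0 n)) = c n" by (simp only: chi_law c_def)
  moreover have "enn2real (chi2 \<pi> \<mu>0) = c 0" by (simp only: Chi0[symmetric] c_def)
  moreover have "enn2real (dirichlet \<pi> (kpow \<pi> K 2) (\<lambda>x. enn2real (RN_deriv \<pi> \<mu>0 x))) = c 0 - c 1"
    by (simp only: hd dir_c)
  ultimately show ?thesis by (simp only:)
qed

end
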